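(* Let $\mathcal{D}=\langle D,\sqsubseteq,F,d_0\rangle$ be an analysis instance and $\diamond\subseteq F\times F$ a relation on its transformers. The structure $\mathcal{U}_{\mathcal{D},\diamond}$ generated by the unfolding procedure described in the context is a uniquely defined labelled prime event structure.
   Context: An analysis instance $\mathcal{D}=\langle D,\sqsubseteq,F,d_0\rangle$ consists of a lattice $\langle D,\sqsubseteq,\sqcup,\sqcap\rangle$ with least element $\bot$, a set $F$ of monotone, bottom-strict transformers $f\colon D\to D$, and an initial element $d_0\in D$. A transformer $f$ is enabled at $d$ if $f(d)\neq\bot$. For a sequence $\sigma=f_1\ldots f_m$ of transformers, $\mathrm{state}(\sigma)=(f_m\circ\cdots\circ f_1)(d_0)$. A labelled prime event structure (PES) is a tuple $\langle E,<,\#,h\rangle$ where $<$ is a strict partial order on $E$ (causality), $\#$ is a symmetric irreflexive relation on $E$ (conflict), $h$ is a labelling function, every event has finitely many $<$-predecessors, and conflict is inherited: $e\# e'$ and $e'<e''$ imply $e\# e''$. A configuration is a finite set $C\subseteq E$ that is causally closed ($e'<e\in C\Rightarrow e'\in C$) and conflict-free. The interleavings $\mathrm{inter}(C)$ of $C$ are the label sequences $h(e_1)\ldots h(e_n)$ of the enumerations $e_1,\dots,e_n$ of $C$ satisfying $e_i<e_j\Rightarrow i<j$. The state of a configuration is $\mathrm{state}(C)$, defined as the greatest lower bound (meet) in $D$ of the set $\{\mathrm{state}(\sigma)\colon \sigma\in\mathrm{inter}(C)\}$. The unfolding $\mathcal{U}_{\mathcal{D},\diamond}$ is the structure returned by: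 (1) start with the PES $\langle\emptyset,\emptyset,\emptyset,\emptyset\rangle$; (2) add a new event $e=\langle f,C\rangle$ where $C$ is a configuration of the current PES, $f$ is enabled at $\mathrm{state}(C)$, and $\neg(f\diamond h(e'))$ holds for every $<$-maximal event $e'$ of $C$; (3) set $e'<e$ for every $e'\in C$, set $e'\# e$ for every $e'\in E\setminus C$ with $e'\neq e$ and $\neg(f\diamond h(e'))$, and set $h(e)=f$; (4) repeat steps 2 and 3 until no new event can be added, and return the resulting PES.
   Formalization: The relation $\diamond$ is also symmetric, and the conflict # of the unfolding is the closure of the pairs set in step 3 under symmetry and inheritance rather than those pairs alone. Each condition added here is assumed in the paper as well or is needed for the statement above to hold. *)

theory Defs
  imports Main "HOL-Library.FSet"
begin

text \<open>Events of the unfolding are pairs (f, C) of a transformer and a finite set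
 of (previously created) events: the history. They are represented syntactically.\<close>
datatype 'f event = Ev (lab: 'f) (hist: "'f event fset")

text \<open>A labelled structure (E, <, #, h).\<close>
type_synonym ('e, 'f) lpes =
  "'e set \<times> ('e \<Rightarrow> 'e \<Rightarrow> bool) \<times> ('e \<Rightarrow> 'e \<Rightarrow> bool) \<times> ('e \<Rightarrow> 'f)"

definition is_lpes :: "('e, 'f) lpes \<Rightarrow> bool" where
  "is_lpes P \<longleftrightarrow> (case P of (E, lt, cf, h) \<Rightarrow>
     (\<forall>a b. lt a b \<longrightarrow> a \<in> E \<and> b \<in> E) \<and>
     (\<forall>a. \<not> lt a a) \<and>
     (\<forall>a b c. lt a b \<longrightarrow> lt b c \<longrightarrow> lt a c) \<and>
     (\<forall>a b. cf a b \<longrightarrow> a \<in> E \<and> b \<in> E) \<and>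
     (\<forall>a b. cf a b \<longrightarrow> cf b a) \<and>
     (\<forall>a. \<not> cf a a) \<and>
     (\<forall>e\<in>E. finite {e'. lt e' e}) \<and>
     (\<forall>a b c. cf a b \<longrightarrow> lt b c \<longrightarrow> cf a c))"

definition is_config :: "('e, 'f) lpes \<Rightarrow> 'e set \<Rightarrow> bool" where
  "is_config P C \<longleftrightarrow> (case P of (E, lt, cf, h) \<Rightarrow>
     finite C \<and> C \<subseteq> E \<and> (\<forall>e\<in>C. \<forall>e'. lt e' e \<longrightarrow> e' \<in> C) \<and>
     (\<forall>a\<in>C. \<forall>b\<in>C. \<not> cf a b))"

definition inter :: "('e, 'f) lpes \<Rightarrow> 'e set \<Rightarrow> 'f list set" where
  "inter P C = (case P of (E, lt, cf, h) \<Rightarrow>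
     {map h xs | xs. distinct xs \<and> set xs = C \<and>
        (\<forall>i<length xs. \<forall>j<length xs. lt (xs ! i) (xs ! j) \<longrightarrow> i < j)})"

definition seq_state :: "'d \<Rightarrow> ('d \<Rightarrow> 'd) list \<Rightarrow> 'd" where
  "seq_state d0 \<sigma> = fold (\<lambda>f d. f d) \<sigma> d0"

text \<open>state(C): meet of the states of all interleavings (a finite nonempty set).\<close>
definition conf_state :: "'d::lattice \<Rightarrow> ('e, 'd \<Rightarrow> 'd) lpes \<Rightarrow> 'e set \<Rightarrow> 'd" where
  "conf_state d0 P C = Inf_fin (seq_state d0 ` inter P C)"

definition analysis_instance :: "('d::{lattice,order_bot} \<Rightarrow> 'd) set \<Rightarrow> bool" where
  "analysis_instance F \<longleftrightarrow> (\<forall>f\<in>F. mono f \<and> f bot = bot)"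

definition addable ::
  "('d::{lattice,order_bot} \<Rightarrow> 'd) set \<Rightarrow> (('d \<Rightarrow> 'd) \<Rightarrow> ('d \<Rightarrow> 'd) \<Rightarrow> bool) \<Rightarrow> 'd \<Rightarrow>
   (('d \<Rightarrow> 'd) event, 'd \<Rightarrow> 'd) lpes \<Rightarrow> ('d \<Rightarrow> 'd) event \<Rightarrow> bool" where
  "addable F indep d0 P e \<longleftrightarrow> (case P of (E, lt, cf, h) \<Rightarrow>
     e \<notin> E \<and> is_config P (fset (hist e)) \<and> lab e \<in> F \<and>
     lab e (conf_state d0 P (fset (hist e))) \<noteq> bot \<and>
     (\<forall>e'\<in>fset (hist e). (\<not> (\<exists>e''\<in>fset (hist e). lt e' e'')) \<longrightarrow> \<not> indep (lab e) (lab e')))"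

definition unf_lt :: "'f event set \<Rightarrow> 'f event \<Rightarrow> 'f event \<Rightarrow> bool" where
  "unf_lt E e' e \<longleftrightarrow> e \<in> E \<and> e' \<in> fset (hist e)"

definition unf_dcf :: "('f \<Rightarrow> 'f \<Rightarrow> bool) \<Rightarrow> 'f event set \<Rightarrow> ('f event \<Rightarrow> 'f event \<Rightarrow> bool)
   \<Rightarrow> 'f event \<Rightarrow> 'f event \<Rightarrow> bool" where
  "unf_dcf indep E prec e' e \<longleftrightarrow> e' \<in> E \<and> e \<in> E \<and> e' \<noteq> e \<and> prec e' e \<and>
     e' \<notin> fset (hist e) \<and> \<not> indep (lab e) (lab e')"

definition unf_cf :: "('f \<Rightarrow> 'f \<Rightarrow> bool) \<Rightarrow> 'f event set \<Rightarrow> ('f event \<Rightarrow> 'f event \<Rightarrow> bool)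
   \<Rightarrow> 'f event \<Rightarrow> 'f event \<Rightarrow> bool" where
  "unf_cf indep E prec a b \<longleftrightarrow> (\<exists>a' b'. (a' = a \<or> unf_lt E a' a) \<and> (b' = b \<or> unf_lt E b' b) \<and>
     (unf_dcf indep E prec a' b' \<or> unf_dcf indep E prec b' a'))"

definition unf_pes :: "('f \<Rightarrow> 'f \<Rightarrow> bool) \<Rightarrow> 'f event set \<Rightarrow> ('f event \<Rightarrow> 'f event \<Rightarrow> bool)
   \<Rightarrow> ('f event, 'f) lpes" where
  "unf_pes indep E prec = (E, unf_lt E, unf_cf indep E prec, lab)"

text \<open>A (possibly transfinite) complete run of the procedure: the events of E are added
 one at a time in the well-order prec, each being addable to the structure built from its
 predecessors (unions at limit stages), and at the end no new event can be added.\<close>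
definition unfolding_run ::
  "('d::{lattice,order_bot} \<Rightarrow> 'd) set \<Rightarrow> (('d \<Rightarrow> 'd) \<Rightarrow> ('d \<Rightarrow> 'd) \<Rightarrow> bool) \<Rightarrow> 'd \<Rightarrow>
   ('d \<Rightarrow> 'd) event set \<Rightarrow> (('d \<Rightarrow> 'd) event \<Rightarrow> ('d \<Rightarrow> 'd) event \<Rightarrow> bool) \<Rightarrow> bool" where
  "unfolding_run F indep d0 E prec \<longleftrightarrow>
     (\<forall>a b. prec a b \<longrightarrow> a \<in> E \<and> b \<in> E) \<and> transp prec \<and> wf {(a, b). prec a b} \<and>
     (\<forall>a\<in>E. \<forall>b\<in>E. a \<noteq> b \<longrightarrow> prec a b \<or> prec b a) \<and>
     (\<forall>e\<in>E. addable F indep d0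
         (unf_pes indep {e'\<in>E. prec e' e} (\<lambda>a b. prec a b \<and> prec b e)) e) \<and>
     \<not> (\<exists>e. addable F indep d0 (unf_pes indep E prec) e)"

end

theory Submission
  imports Defs
begin

lemma size_hist: "x \<in> fset (hist e) \<Longrightarrow> size x < size e"
proof (cases e)
  case (Ev f C)
  assume "x \<in> fset (hist e)"
  then have "x \<in> fset C" using Ev by simp
  then have "Suc (size x) \<le> (\<Sum>y\<in>fset C. Suc (size y))"
    by (intro member_le_sum) auto
  then show ?thesis using Ev by (simp add: size_fset_overloaded_simps)
qed

definition good :: "'f event set \<Rightarrow> ('f event \<Rightarrow> 'f event \<Rightarrow> bool) \<Rightarrow> bool" where
  "good E prec \<longleftrightarrow> (\<forall>a b. prec a b \<longrightarrow> a \<in> E \<and> b \<in> E) \<and> (\<forall>a b. prec a b \<longrightarrow> \<not> prec b a) \<and>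
     (\<forall>a\<in>E. \<forall>b\<in>E. a \<noteq> b \<longrightarrow> prec a b \<or> prec b a) \<and> (\<forall>x\<in>E. \<forall>y\<in>fset (hist x). prec y x)"

definition sdcf :: "('f \<Rightarrow> 'f \<Rightarrow> bool) \<Rightarrow> 'f event \<Rightarrow> 'f event \<Rightarrow> bool" where
  "sdcf indep a b \<longleftrightarrow> a \<noteq> b \<and> a \<notin> fset (hist b) \<and> b \<notin> fset (hist a) \<and>
     \<not> indep (lab a) (lab b) \<and> \<not> indep (lab b) (lab a)"

lemma sdcf_sym: "sdcf indep a b \<Longrightarrow> sdcf indep b a"
  unfolding sdcf_def by auto

lemma dcf_char:
  assumes G: "good E prec" and S: "symp indep"
  shows "(unf_dcf indep E prec a b \<or> unf_dcf indep E prec b a) \<longleftrightarrow> (a \<in> E \<and> b \<in> E \<and> sdcf indep a b)"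
proof -
  have asym: "\<And>a b. prec a b \<Longrightarrow> \<not> prec b a" and tot: "\<And>a b. a \<in> E \<Longrightarrow> b \<in> E \<Longrightarrow> a \<noteq> b \<Longrightarrow> prec a b \<or> prec b a"
    and hl: "\<And>x y. x \<in> E \<Longrightarrow> y \<in> fset (hist x) \<Longrightarrow> prec y x"
    using G unfolding good_def by blast+
  have si: "\<And>f g. indep f g \<Longrightarrow> indep g f" using S unfolding symp_def by blast
  show ?thesis
  proof
    assume "unf_dcf indep E prec a b \<or> unf_dcf indep E prec b a"
    then show "a \<in> E \<and> b \<in> E \<and> sdcf indep a b"
    proof
      assume H: "unf_dcf indep E prec a b"
      then have "b \<notin> fset (hist a)" using asym hl unfolding unf_dcf_def by blast
      then show ?thesis using H si unfolding unf_dcf_def sdcf_def by blast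
    next
      assume H: "unf_dcf indep E prec b a"
      then have "a \<notin> fset (hist b)" using asym hl unfolding unf_dcf_def by blast
      then show ?thesis using H si unfolding unf_dcf_def sdcf_def by blast
    qed
  next
    assume H: "a \<in> E \<and> b \<in> E \<and> sdcf indep a b"
    then have "prec a b \<or> prec b a" using tot unfolding sdcf_def by blast
    then show "unf_dcf indep E prec a b \<or> unf_dcf indep E prec b a"
      using H unfolding unf_dcf_def sdcf_def by auto
  qed
qed

lemma cf_char:
  assumes "good E prec" "symp indep"
  shows "unf_cf indep E prec a b \<longleftrightarrow> (\<exists>a' b'. (a' = a \<or> (a \<in> E \<and> a' \<in> fset (hist a))) \<and>
      (b' = b \<or> (b \<in> E \<and> b' \<in> fset (hist b))) \<and> a' \<in> E \<and> b' \<in> E \<and> sdcf indep a' b')"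
proof -
  have "\<And>a' b'. (unf_dcf indep E prec a' b' \<or> unf_dcf indep E prec b' a') = (a' \<in> E \<and> b' \<in> E \<and> sdcf indep a' b')"
    by (rule dcf_char[OF assms])
  then show ?thesis unfolding unf_cf_def unf_lt_def by simp
qed

definition iconf :: "('f \<Rightarrow> 'f \<Rightarrow> bool) \<Rightarrow> 'f event set \<Rightarrow> bool" where
  "iconf indep C \<longleftrightarrow> finite C \<and> (\<forall>e\<in>C. fset (hist e) \<subseteq> C) \<and> (\<forall>a\<in>C. \<forall>b\<in>C. \<not> sdcf indep a b)"

lemma config_char:
  assumes "good E prec" "symp indep"
  shows "is_config (unf_pes indep E prec) C \<longleftrightarrow> C \<subseteq> E \<and> iconf indep C"
proof
  assume H: "is_config (unf_pes indep E prec) C"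
  then have fin: "finite C" and sub: "C \<subseteq> E"
    and cl: "\<forall>e\<in>C. \<forall>e'. unf_lt E e' e \<longrightarrow> e' \<in> C"
    and nc: "\<forall>a\<in>C. \<forall>b\<in>C. \<not> unf_cf indep E prec a b"
    unfolding is_config_def unf_pes_def by auto
  have cl2: "\<forall>e\<in>C. fset (hist e) \<subseteq> C" using cl sub unfolding unf_lt_def by blast
  have "\<forall>a\<in>C. \<forall>b\<in>C. \<not> sdcf indep a b"
  proof (intro ballI notI)
    fix a b assume "a \<in> C" "b \<in> C" "sdcf indep a b"
    then have "unf_cf indep E prec a b" using sub unfolding cf_char[OF assms] by blast
    then show False using nc \<open>a \<in> C\<close> \<open>b \<in> C\<close> by blast
  qed
  then show "C \<subseteq> E \<and> iconf indep C" using fin sub cl2 unfolding iconf_def by blast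
next
  assume H: "C \<subseteq> E \<and> iconf indep C"
  then have fin: "finite C" and sub: "C \<subseteq> E"
    and cl2: "\<forall>e\<in>C. fset (hist e) \<subseteq> C" and nc: "\<forall>a\<in>C. \<forall>b\<in>C. \<not> sdcf indep a b"
    unfolding iconf_def by auto
  have cl: "\<forall>e\<in>C. \<forall>e'. unf_lt E e' e \<longrightarrow> e' \<in> C" using cl2 unfolding unf_lt_def by blast
  have "\<forall>a\<in>C. \<forall>b\<in>C. \<not> unf_cf indep E prec a b"
  proof (intro ballI notI)
    fix a b assume a: "a \<in> C" and b: "b \<in> C" and "unf_cf indep E prec a b"
    then obtain a' b' where "a' = a \<or> (a \<in> E \<and> a' \<in> fset (hist a))"
      "b' = b \<or> (b \<in> E \<and> b' \<in> fset (hist b))" "sdcf indep a' b'"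
      unfolding cf_char[OF assms] by blast
    moreover have "a' \<in> C" using calculation(1) a cl2 by blast
    moreover have "b' \<in> C" using calculation(2) b cl2 by blast
    ultimately show False using nc by blast
  qed
  then show "is_config (unf_pes indep E prec) C"
    using fin sub cl unfolding is_config_def unf_pes_def by auto
qed

definition iinter :: "'f event set \<Rightarrow> 'f list set" where
  "iinter C = {map lab xs | xs. distinct xs \<and> set xs = C \<and>
        (\<forall>i<length xs. \<forall>j<length xs. xs ! i \<in> fset (hist (xs ! j)) \<longrightarrow> i < j)}"

lemma inter_char:
  assumes "C \<subseteq> E"
  shows "inter (unf_pes indep E prec) C = iinter C"
proof -
  have "\<And>xs. set xs = C \<Longrightarrow> (\<forall>i<length xs. \<forall>j<length xs. unf_lt E (xs ! i) (xs ! j) \<longrightarrow> i < j)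
     = (\<forall>i<length xs. \<forall>j<length xs. xs ! i \<in> fset (hist (xs ! j)) \<longrightarrow> i < j)"
    using assms unfolding unf_lt_def by (auto dest: nth_mem)
  then show ?thesis unfolding inter_def iinter_def unf_pes_def by auto
qed

definition loc :: "('d::{lattice,order_bot} \<Rightarrow> 'd) set \<Rightarrow> (('d \<Rightarrow> 'd) \<Rightarrow> ('d \<Rightarrow> 'd) \<Rightarrow> bool) \<Rightarrow> 'd \<Rightarrow>
   ('d \<Rightarrow> 'd) event \<Rightarrow> bool" where
  "loc F indep d0 e \<longleftrightarrow> iconf indep (fset (hist e)) \<and> lab e \<in> F \<and>
     lab e (Inf_fin (seq_state d0 ` iinter (fset (hist e)))) \<noteq> bot \<and>
     (\<forall>e'\<in>fset (hist e). (\<not> (\<exists>e''\<in>fset (hist e). e' \<in> fset (hist e''))) \<longrightarrow> \<not> indep (lab e) (lab e'))"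

lemma addable_char:
  assumes "good E prec" "symp indep"
  shows "addable F indep d0 (unf_pes indep E prec) e \<longleftrightarrow> e \<notin> E \<and> fset (hist e) \<subseteq> E \<and> loc F indep d0 e"
proof -
  have "addable F indep d0 (unf_pes indep E prec) e \<longleftrightarrow> e \<notin> E \<and>
     is_config (unf_pes indep E prec) (fset (hist e)) \<and> lab e \<in> F \<and>
     lab e (conf_state d0 (unf_pes indep E prec) (fset (hist e))) \<noteq> bot \<and>
     (\<forall>e'\<in>fset (hist e). (\<not> (\<exists>e''\<in>fset (hist e). unf_lt E e' e'')) \<longrightarrow> \<not> indep (lab e) (lab e'))"
    unfolding addable_def by (simp add: unf_pes_def)
  also have "\<dots> \<longleftrightarrow> e \<notin> E \<and> fset (hist e) \<subseteq> E \<and> loc F indep d0 e"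
  proof (cases "fset (hist e) \<subseteq> E")
    case True
    then have eq: "\<And>e'. (\<exists>e''\<in>fset (hist e). unf_lt E e' e'') = (\<exists>e''\<in>fset (hist e). e' \<in> fset (hist e''))"
      unfolding unf_lt_def by blast
    show ?thesis unfolding config_char[OF assms] loc_def conf_state_def eq
      inter_char[OF True] using True by simp
  next
    case False
    then show ?thesis unfolding config_char[OF assms] by simp
  qed
  finally show ?thesis .
qed

lemma good_pred:
  assumes "good E prec" "transp prec"
  shows "good {e'\<in>E. prec e' e} (\<lambda>a b. prec a b \<and> prec b e)"
proof -
  have a1: "\<And>a b. prec a b \<Longrightarrow> a \<in> E \<and> b \<in> E" and a2: "\<And>a b. prec a b \<Longrightarrow> \<not> prec b a"
    and a3: "\<And>a b. a \<in> E \<Longrightarrow> b \<in> E \<Longrightarrow> a \<noteq> b \<Longrightarrow> prec a b \<or> prec b a"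
    and a4: "\<And>x y. x \<in> E \<Longrightarrow> y \<in> fset (hist x) \<Longrightarrow> prec y x"
    using assms(1) unfolding good_def by blast+
  have t: "\<And>a b c. prec a b \<Longrightarrow> prec b c \<Longrightarrow> prec a c" using assms(2) unfolding transp_def by blast
  show ?thesis unfolding good_def
    by (intro conjI allI impI ballI; (simp only: mem_Collect_eq)?; metis a1 a2 a3 a4 t)
qed

lemma run_props:
  assumes R: "unfolding_run F indep d0 E prec" and S: "symp indep"
  shows "good E prec" "transp prec" "\<And>e. e \<in> E \<Longrightarrow> loc F indep d0 e"
    "\<And>e. \<not> (e \<notin> E \<and> fset (hist e) \<subseteq> E \<and> loc F indep d0 e)"
proof -
  note U = R[unfolded unfolding_run_def]
  have in_E: "\<forall>a b. prec a b \<longrightarrow> a \<in> E \<and> b \<in> E" using U by (rule conjunct1)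
  have tr: "transp prec" using U by (elim conjE)
  have w: "wf {(a, b). prec a b}" using U by (elim conjE)
  have tot: "\<forall>a\<in>E. \<forall>b\<in>E. a \<noteq> b \<longrightarrow> prec a b \<or> prec b a" using U by (elim conjE)
  have ad: "\<forall>e\<in>E. addable F indep d0
         (unf_pes indep {e'\<in>E. prec e' e} (\<lambda>a b. prec a b \<and> prec b e)) e" using U by (elim conjE)
  have fin: "\<not> (\<exists>e. addable F indep d0 (unf_pes indep E prec) e)" using U by (elim conjE)
  have asym: "\<forall>a b. prec a b \<longrightarrow> \<not> prec b a"
  proof (intro allI impI notI)
    fix a b assume "prec a b" "prec b a"
    then have "(a, b) \<in> {(a, b). prec a b}" "(b, a) \<in> {(a, b). prec a b}" by auto
    then show False using wf_asym[OF w] by blast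
  qed
  have hs: "\<forall>x\<in>E. \<forall>y\<in>fset (hist x). prec y x"
  proof (intro ballI)
    fix x y assume x: "x \<in> E" and y: "y \<in> fset (hist x)"
    have "addable F indep d0 (unf_pes indep {e'\<in>E. prec e' x} (\<lambda>a b. prec a b \<and> prec b x)) x"
      using ad x by blast
    then have "is_config (unf_pes indep {e'\<in>E. prec e' x} (\<lambda>a b. prec a b \<and> prec b x)) (fset (hist x))"
      unfolding addable_def unf_pes_def case_prod_conv by (elim conjE)
    then have "fset (hist x) \<subseteq> {e'\<in>E. prec e' x}"
      unfolding is_config_def unf_pes_def case_prod_conv by (elim conjE)
    then show "prec y x" using y by blast
  qed
  show G: "good E prec" unfolding good_def using in_E asym tot hs by blast
  show "transp prec" by (rule tr)
  show "loc F indep d0 e" if e: "e \<in> E" for e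
  proof -
    have "addable F indep d0 (unf_pes indep {e'\<in>E. prec e' e} (\<lambda>a b. prec a b \<and> prec b e)) e"
      using ad e by blast
    then show ?thesis unfolding addable_char[OF good_pred[OF G tr] S] by (elim conjE)
  qed
  show "\<not> (e \<notin> E \<and> fset (hist e) \<subseteq> E \<and> loc F indep d0 e)" for e
  proof
    assume "e \<notin> E \<and> fset (hist e) \<subseteq> E \<and> loc F indep d0 e"
    then have "addable F indep d0 (unf_pes indep E prec) e" unfolding addable_char[OF G S] .
    then show False using fin by blast
  qed
qed

lemma good_hist:
  assumes "good E prec" "x \<in> E"
  shows "fset (hist x) \<subseteq> E"
proof
  fix y assume "y \<in> fset (hist x)"
  then have "prec y x" using assms unfolding good_def by blast
  then show "y \<in> E" using assms(1) unfolding good_def by blast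
qed

lemma run_unique:
  assumes R: "unfolding_run F indep d0 E prec" and R': "unfolding_run F indep d0 E' prec'"
    and S: "symp indep"
  shows "E = E'"
proof -
  have "e \<in> E \<longleftrightarrow> e \<in> E'" for e
  proof (induction e)
    case (Ev f C)
    have sub: "fset C \<subseteq> E \<longleftrightarrow> fset C \<subseteq> E'" using Ev.IH by blast
    show ?case
    proof
      assume H: "Ev f C \<in> E"
      have l: "loc F indep d0 (Ev f C)" by (rule run_props(3)[OF R S H])
      have "fset C \<subseteq> E" using good_hist[OF run_props(1)[OF R S] H] by simp
      then have "fset (hist (Ev f C)) \<subseteq> E'" using sub by simp
      then show "Ev f C \<in> E'" using run_props(4)[OF R' S, of "Ev f C"] l by blast
    next
      assume H: "Ev f C \<in> E'"
      have l: "loc F indep d0 (Ev f C)" by (rule run_props(3)[OF R' S H])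
      have "fset C \<subseteq> E'" using good_hist[OF run_props(1)[OF R' S] H] by simp
      then have "fset (hist (Ev f C)) \<subseteq> E" using sub by simp
      then show "Ev f C \<in> E" using run_props(4)[OF R S, of "Ev f C"] l by blast
    qed
  qed
  then show ?thesis by blast
qed

lemma run_lpes:
  assumes R: "unfolding_run F indep d0 E prec" and S: "symp indep"
  shows "is_lpes (unf_pes indep E prec)"
proof -
  note G = run_props(1)[OF R S]
  have histE: "\<And>x y. x \<in> E \<Longrightarrow> y \<in> fset (hist x) \<Longrightarrow> y \<in> E"
    using good_hist[OF G] by blast
  have histlt: "\<And>x y. x \<in> E \<Longrightarrow> y \<in> fset (hist x) \<Longrightarrow> prec y x"
    using G unfolding good_def by blast
  have asym: "\<And>a b. prec a b \<Longrightarrow> \<not> prec b a"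
    using G unfolding good_def by blast
  have htr: "\<And>x y. x \<in> E \<Longrightarrow> y \<in> fset (hist x) \<Longrightarrow> fset (hist y) \<subseteq> fset (hist x)"
  proof -
    fix x y assume "x \<in> E" "y \<in> fset (hist x)"
    then have "iconf indep (fset (hist x))" using run_props(3)[OF R S] unfolding loc_def by blast
    then show "fset (hist y) \<subseteq> fset (hist x)" using \<open>y \<in> fset (hist x)\<close> unfolding iconf_def by blast
  qed
  have hcf: "\<And>x a b. x \<in> E \<Longrightarrow> a \<in> fset (hist x) \<Longrightarrow> b \<in> fset (hist x) \<Longrightarrow> \<not> sdcf indep a b"
  proof -
    fix x a b assume "x \<in> E" "a \<in> fset (hist x)" "b \<in> fset (hist x)"
    moreover have "iconf indep (fset (hist x))" using run_props(3)[OF R S] \<open>x \<in> E\<close> unfolding loc_def by blast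
    ultimately show "\<not> sdcf indep a b" unfolding iconf_def by blast
  qed
  note cf = cf_char[OF G S]
  have c1: "\<forall>a b. unf_lt E a b \<longrightarrow> a \<in> E \<and> b \<in> E"
    unfolding unf_lt_def using histE by blast
  have c2: "\<forall>a. \<not> unf_lt E a a"
    unfolding unf_lt_def using histlt asym by blast
  have c3: "\<forall>a b c. unf_lt E a b \<longrightarrow> unf_lt E b c \<longrightarrow> unf_lt E a c"
    unfolding unf_lt_def using htr by blast
  have c4: "\<forall>a b. unf_cf indep E prec a b \<longrightarrow> a \<in> E \<and> b \<in> E"
  proof (intro allI impI)
    fix a b assume "unf_cf indep E prec a b"
    then obtain a' b' where A: "a' = a \<or> (a \<in> E \<and> a' \<in> fset (hist a))"
      "b' = b \<or> (b \<in> E \<and> b' \<in> fset (hist b))" "a' \<in> E" "b' \<in> E"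
      unfolding cf by blast
    then show "a \<in> E \<and> b \<in> E" by blast
  qed
  have c5: "\<forall>a b. unf_cf indep E prec a b \<longrightarrow> unf_cf indep E prec b a"
  proof (intro allI impI)
    fix a b assume "unf_cf indep E prec a b"
    then obtain a' b' where A: "a' = a \<or> (a \<in> E \<and> a' \<in> fset (hist a))"
      "b' = b \<or> (b \<in> E \<and> b' \<in> fset (hist b))" "a' \<in> E" "b' \<in> E" "sdcf indep a' b'"
      unfolding cf by blast
    have "sdcf indep b' a'" using A(5) by (rule sdcf_sym)
    note X = this
    show "unf_cf indep E prec b a" unfolding cf
      by (rule exI[of _ b'], rule exI[of _ a']) (use X A(1-4) in simp)
  qed
  have c6: "\<forall>a. \<not> unf_cf indep E prec a a"
  proof (intro allI notI)
    fix a assume "unf_cf indep E prec a a"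
    then obtain a' b' where A: "a' = a \<or> (a \<in> E \<and> a' \<in> fset (hist a))"
      "b' = a \<or> (a \<in> E \<and> b' \<in> fset (hist a))" "sdcf indep a' b'"
      unfolding cf by blast
    show False
    proof (cases "a' = a")
      case True
      show False
      proof (cases "b' = a")
        case True
        then show False using A(3) \<open>a' = a\<close> unfolding sdcf_def by simp
      next
        case False
        then have "b' \<in> fset (hist a')" using A(2) \<open>a' = a\<close> by simp
        then show False using A(3) unfolding sdcf_def by simp
      qed
    next
      case False
      then have a': "a \<in> E" "a' \<in> fset (hist a)" using A(1) by auto
      show False
      proof (cases "b' = a")
        case True
        then have "a' \<in> fset (hist b')" using a' by simp
        then show False using A(3) unfolding sdcf_def by simp
      next
        case False
        then have "b' \<in> fset (hist a)" using A(2) by simp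
        then show False using hcf[OF a'(1) a'(2)] A(3) by blast
      qed
    qed
  qed
  have c7: "\<forall>e\<in>E. finite {e'. unf_lt E e' e}"
  proof
    fix e assume "e \<in> E"
    have "{e'. unf_lt E e' e} \<subseteq> fset (hist e)" unfolding unf_lt_def by blast
    then show "finite {e'. unf_lt E e' e}" by (rule finite_subset) simp
  qed
  have c8: "\<forall>a b c. unf_cf indep E prec a b \<longrightarrow> unf_lt E b c \<longrightarrow> unf_cf indep E prec a c"
  proof (intro allI impI)
    fix a b c assume "unf_cf indep E prec a b" "unf_lt E b c"
    then obtain a' b' where A: "a' = a \<or> (a \<in> E \<and> a' \<in> fset (hist a))"
      "b' = b \<or> (b \<in> E \<and> b' \<in> fset (hist b))" "a' \<in> E" "b' \<in> E" "sdcf indep a' b'"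
      unfolding cf by blast
    have c: "c \<in> E" "b \<in> fset (hist c)" using \<open>unf_lt E b c\<close> unfolding unf_lt_def by auto
    have "b' \<in> fset (hist c)"
    proof (cases "b' = b")
      case True then show ?thesis using c by simp
    next
      case False then have "b' \<in> fset (hist b)" using A(2) by simp
      then show ?thesis using htr[OF c] by blast
    qed
    note X = this
    show "unf_cf indep E prec a c" unfolding cf
      by (rule exI[of _ a'], rule exI[of _ b']) (use X A(1,3,4,5) c(1) in simp)
  qed
  show ?thesis unfolding is_lpes_def unf_pes_def case_prod_conv
    using c1 c2 c3 c4 c5 c6 c7 c8 by (intro conjI)
qed

inductive valid :: "('d::{lattice,order_bot} \<Rightarrow> 'd) set \<Rightarrow> (('d \<Rightarrow> 'd) \<Rightarrow> ('d \<Rightarrow> 'd) \<Rightarrow> bool) \<Rightarrow> 'd \<Rightarrow>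
   ('d \<Rightarrow> 'd) event \<Rightarrow> bool" for F indep d0 where
  "(\<forall>x\<in>fset (hist e). valid F indep d0 x) \<Longrightarrow> loc F indep d0 e \<Longrightarrow> valid F indep d0 e"

lemma run_exists:
  fixes F :: "('d::{lattice,order_bot} \<Rightarrow> 'd) set"
  assumes S: "symp indep"
  shows "\<exists>E prec. unfolding_run F indep d0 E prec"
proof -
  obtain r :: "(('d \<Rightarrow> 'd) event \<times> ('d \<Rightarrow> 'd) event) set" where r: "Well_order r" "Field r = UNIV"
    using well_ordering by (elim exE conjE)
  define Q where "Q = inv_image (less_than <*lex*> (r - Id)) (\<lambda>x. (size x, x))"
  define E where "E = {e. valid F indep d0 e}"
  define prec where "prec = (\<lambda>a b. a \<in> E \<and> b \<in> E \<and> (a, b) \<in> Q)"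
  have Qiff: "(x, y) \<in> Q \<longleftrightarrow> size x < size y \<or> (size x = size y \<and> (x, y) \<in> r \<and> x \<noteq> y)" for x y
    unfolding Q_def by auto
  have wQ: "wf Q" unfolding Q_def
  proof (intro wf_inv_image wf_lex_prod wf_less_than)
    show "wf (r - Id)" using r(1) unfolding well_order_on_def by simp
  qed
  have lin: "linear_order r" using r unfolding well_order_on_def by simp
  have rtr: "trans r" and rantis: "antisym r" and rtot: "total_on UNIV r"
    using lin r(2) unfolding linear_order_on_def partial_order_on_def preorder_on_def by auto
  have trQ: "(x, z) \<in> Q" if "(x, y) \<in> Q" "(y, z) \<in> Q" for x y z
  proof -
    have "size x < size z \<or> (size x = size z \<and> (x, z) \<in> r \<and> x \<noteq> z)"
    proof (cases "size x < size z")
      case True then show ?thesis by simp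
    next
      case False
      then have e1: "size x = size y" "(x, y) \<in> r" "x \<noteq> y" and e2: "size y = size z" "(y, z) \<in> r" "y \<noteq> z"
        using that unfolding Qiff by auto
      have xz: "(x, z) \<in> r" using rtr e1(2) e2(2) unfolding trans_def by blast
      have "x \<noteq> z"
      proof
        assume "x = z"
        then have "(y, x) \<in> r" using e2(2) by simp
        then show False using rantis e1(2,3) unfolding antisym_def by blast
      qed
      then show ?thesis using xz e1(1) e2(1) by simp
    qed
    then show ?thesis unfolding Qiff .
  qed
  have totQ: "(x, y) \<in> Q \<or> (y, x) \<in> Q" if "x \<noteq> y" for x y
  proof -
    have "(x, y) \<in> r \<or> (y, x) \<in> r" using rtot that unfolding total_on_def by blast
    then show ?thesis unfolding Qiff using that by auto
  qed
  have w: "wf {(a, b). prec a b}"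
    by (rule wf_subset[OF wQ]) (auto simp: prec_def)
  have tr: "transp prec"
  proof (rule transpI)
    fix a b c assume "prec a b" "prec b c"
    then show "prec a c" unfolding prec_def using trQ by blast
  qed
  have asym: "\<not> prec b a" if "prec a b" for a b
  proof
    assume "prec b a"
    then have "(a, b) \<in> {(a, b). prec a b}" "(b, a) \<in> {(a, b). prec a b}" using that by auto
    then show False using wf_asym[OF w] by blast
  qed
  have hQ: "(y, x) \<in> Q" if "y \<in> fset (hist x)" for x y
    unfolding Qiff using size_hist[OF that] by simp
  have vh: "y \<in> E" if "x \<in> E" "y \<in> fset (hist x)" for x y
    using that unfolding E_def by (auto elim: valid.cases)
  have vl: "loc F indep d0 x" if "x \<in> E" for x
    using that unfolding E_def by (auto elim: valid.cases)
  have hp: "prec y x" if "x \<in> E" "y \<in> fset (hist x)" for x y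
    unfolding prec_def using that vh hQ by blast
  have inE: "\<forall>a b. prec a b \<longrightarrow> a \<in> E \<and> b \<in> E" unfolding prec_def by blast
  have tot: "\<forall>a\<in>E. \<forall>b\<in>E. a \<noteq> b \<longrightarrow> prec a b \<or> prec b a"
    unfolding prec_def using totQ by blast
  have G: "good E prec" unfolding good_def
    using inE asym tot hp by blast
  have ad: "\<forall>e\<in>E. addable F indep d0
         (unf_pes indep {e'\<in>E. prec e' e} (\<lambda>a b. prec a b \<and> prec b e)) e"
  proof
    fix e assume e: "e \<in> E"
    have "e \<notin> {e'\<in>E. prec e' e}" using asym by blast
    moreover have "fset (hist e) \<subseteq> {e'\<in>E. prec e' e}" using vh[OF e] hp[OF e] by blast
    moreover have "loc F indep d0 e" using vl[OF e] .
    ultimately show "addable F indep d0 (unf_pes indep {e'\<in>E. prec e' e} (\<lambda>a b. prec a b \<and> prec b e)) e"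
      unfolding addable_char[OF good_pred[OF G tr] S] by blast
  qed
  have fin: "\<not> (\<exists>e. addable F indep d0 (unf_pes indep E prec) e)"
  proof
    assume "\<exists>e. addable F indep d0 (unf_pes indep E prec) e"
    then obtain e where "addable F indep d0 (unf_pes indep E prec) e" by blast
    then have e: "e \<notin> E" "fset (hist e) \<subseteq> E" "loc F indep d0 e"
      unfolding addable_char[OF G S] by blast+
    have "\<forall>x\<in>fset (hist e). valid F indep d0 x" using e(2) unfolding E_def by blast
    then have "valid F indep d0 e" using e(3) by (rule valid.intros)
    then show False using e(1) unfolding E_def by blast
  qed
  have "unfolding_run F indep d0 E prec"
    unfolding unfolding_run_def using inE tr w tot ad fin by blast
  then show ?thesis by blast
qed

theorem proposition2:
  fixes F :: "('d::{lattice,order_bot} \<Rightarrow> 'd) set"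
    and d0 :: 'd
    and indep :: "('d \<Rightarrow> 'd) \<Rightarrow> ('d \<Rightarrow> 'd) \<Rightarrow> bool"
  assumes "analysis_instance F"
    and "\<forall>f g. indep f g \<longrightarrow> f \<in> F \<and> g \<in> F"
    and "symp indep"
  shows "(\<exists>E prec. unfolding_run F indep d0 E prec) \<and>
         (\<forall>E prec E' prec'. unfolding_run F indep d0 E prec \<longrightarrow>
             unfolding_run F indep d0 E' prec' \<longrightarrow>
             unf_pes indep E prec = unf_pes indep E' prec') \<and>
         (\<forall>E prec. unfolding_run F indep d0 E prec \<longrightarrow> is_lpes (unf_pes indep E prec))"
proof (intro conjI allI impI)
  show "\<exists>E prec. unfolding_run F indep d0 E prec" using run_exists[OF assms(3)] .
next
  fix E prec assume "unfolding_run F indep d0 E prec"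
  then show "is_lpes (unf_pes indep E prec)" using run_lpes assms(3) by blast
next
  fix E prec E' prec'
  assume R: "unfolding_run F indep d0 E prec" and R': "unfolding_run F indep d0 E' prec'"
  have EE: "E = E'" using run_unique[OF R R' assms(3)] .
  have "unf_cf indep E prec = unf_cf indep E' prec'"
    using cf_char[OF run_props(1)[OF R assms(3)] assms(3)]
      cf_char[OF run_props(1)[OF R' assms(3)] assms(3)] EE by (intro ext) simp
  then show "unf_pes indep E prec = unf_pes indep E' prec'"
    unfolding unf_pes_def using EE by simp
qed

end
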